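(* Let $K<\mathsf{SL}_2(\mathbf{C})$ be finite, $H\trianglelefteq K$, and $\alpha$ an automorphism of $K/H$ with $\alpha^2=\mathrm{id}$. Let $G=G(K,H,\alpha)$. Then the subgroup $H\wr S_2=H^2\rtimes S_2$ of $K\wr S_2$ is normal in $G$ if and only if $\alpha=1$, and the subgroup $H^2$ is always normal in $G$.
   Context: $K\wr S_2=K^2\rtimes S_2$, where $S_2=\{1,s_{12}\}$ swaps the two factors. $G(K,H,\alpha)$ is the subgroup of $K\wr S_2$ generated by $s_{12}$, $H^2$, and all $(k_1,k_2)\in K^2$ with $k_2H=\alpha(k_1H)$. *)

theory Defs
  imports "HOL-Analysis.Analysis" "HOL-Algebra.Algebra"
begin

definition SL2 :: "(complex^2^2) monoid" where
  "SL2 = \<lparr>carrier = {A. det A = 1}, mult = (\<lambda>A B. A ** B), one = mat 1\<rparr>"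

text \<open>The wreath product K wr S_2 = K^2 semidirect S_2. An element (k1,k2,s)
  stands for (k1,k2) s12^s (s = True means the transposition s12), with
  s12 (k1,k2) s12 = (k2,k1).\<close>
definition wreath2 :: "('a,'b) monoid_scheme \<Rightarrow> ('a \<times> 'a \<times> bool) monoid" where
  "wreath2 K = \<lparr>carrier = carrier K \<times> carrier K \<times> UNIV,
     mult = (\<lambda>(a1,a2,s) (b1,b2,t).
        if s then (a1 \<otimes>\<^bsub>K\<^esub> b2, a2 \<otimes>\<^bsub>K\<^esub> b1, s \<noteq> t)
        else (a1 \<otimes>\<^bsub>K\<^esub> b1, a2 \<otimes>\<^bsub>K\<^esub> b2, s \<noteq> t)),
     one = (\<one>\<^bsub>K\<^esub>, \<one>\<^bsub>K\<^esub>, False)\<rparr>"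

text \<open>G(K,H,alpha): subgroup of K wr S_2 generated by s12, H^2 and all (k1,k2)
  with k2 H = alpha(k1 H). Cosets are the elements of K Mod H (right cosets,
  equal to left cosets as H is normal).\<close>
definition GKHa :: "('a,'b) monoid_scheme \<Rightarrow> 'a set \<Rightarrow> ('a set \<Rightarrow> 'a set) \<Rightarrow> ('a \<times> 'a \<times> bool) set" where
  "GKHa K H \<alpha> = generate (wreath2 K)
     ({(\<one>\<^bsub>K\<^esub>, \<one>\<^bsub>K\<^esub>, True)} \<union> (H \<times> H \<times> {False}) \<union>
      {(k1, k2, False) | k1 k2. k1 \<in> carrier K \<and> k2 \<in> carrier K \<and>
          H #>\<^bsub>K\<^esub> k2 = \<alpha> (H #>\<^bsub>K\<^esub> k1)})"

end

theory Submission
  imports Defs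
begin

lemma wr_carrier: "carrier (wreath2 K) = carrier K \<times> carrier K \<times> UNIV"
  by (simp add: wreath2_def)
lemma wr_one: "\<one>\<^bsub>wreath2 K\<^esub> = (\<one>\<^bsub>K\<^esub>, \<one>\<^bsub>K\<^esub>, False)"
  by (simp add: wreath2_def)
lemma wr_mult: "(a1,a2,s) \<otimes>\<^bsub>wreath2 K\<^esub> (b1,b2,t) =
   (if s then (a1 \<otimes>\<^bsub>K\<^esub> b2, a2 \<otimes>\<^bsub>K\<^esub> b1, s \<noteq> t)
        else (a1 \<otimes>\<^bsub>K\<^esub> b1, a2 \<otimes>\<^bsub>K\<^esub> b2, s \<noteq> t))"
  by (simp add: wreath2_def)

lemma group_wr:
  assumes "group K" shows "group (wreath2 K)"
proof -
  interpret K: group K by fact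
  show ?thesis
  proof (rule groupI)
    fix x y assume "x \<in> carrier (wreath2 K)" "y \<in> carrier (wreath2 K)"
    then show "x \<otimes>\<^bsub>wreath2 K\<^esub> y \<in> carrier (wreath2 K)"
      by (cases x; cases y) (auto simp: wr_carrier wr_mult)
  next
    show "\<one>\<^bsub>wreath2 K\<^esub> \<in> carrier (wreath2 K)" by (simp add: wr_carrier wr_one)
  next
    fix x y z assume "x \<in> carrier (wreath2 K)" "y \<in> carrier (wreath2 K)" "z \<in> carrier (wreath2 K)"
    then show "x \<otimes>\<^bsub>wreath2 K\<^esub> y \<otimes>\<^bsub>wreath2 K\<^esub> z = x \<otimes>\<^bsub>wreath2 K\<^esub> (y \<otimes>\<^bsub>wreath2 K\<^esub> z)"
      by (cases x; cases y; cases z) (auto simp: wr_carrier wr_mult K.m_assoc)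
  next
    fix x assume "x \<in> carrier (wreath2 K)"
    then show "\<one>\<^bsub>wreath2 K\<^esub> \<otimes>\<^bsub>wreath2 K\<^esub> x = x"
      by (cases x) (auto simp: wr_carrier wr_mult wr_one)
  next
    fix x assume "x \<in> carrier (wreath2 K)"
    then obtain a1 a2 s where x: "x = (a1,a2,s)" "a1 \<in> carrier K" "a2 \<in> carrier K"
      by (cases x) (auto simp: wr_carrier)
    show "\<exists>y\<in>carrier (wreath2 K). y \<otimes>\<^bsub>wreath2 K\<^esub> x = \<one>\<^bsub>wreath2 K\<^esub>"
    proof (cases s)
      case True
      then show ?thesis using x
        by (intro bexI[of _ "(inv\<^bsub>K\<^esub> a2, inv\<^bsub>K\<^esub> a1, True)"]) (auto simp: wr_carrier wr_mult wr_one)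
    next
      case False
      then show ?thesis using x
        by (intro bexI[of _ "(inv\<^bsub>K\<^esub> a1, inv\<^bsub>K\<^esub> a2, False)"]) (auto simp: wr_carrier wr_mult wr_one)
    qed
  qed
qed

lemma wr_inv:
  assumes "group K" "a1 \<in> carrier K" "a2 \<in> carrier K"
  shows "inv\<^bsub>wreath2 K\<^esub> (a1,a2,s) = (if s then (inv\<^bsub>K\<^esub> a2, inv\<^bsub>K\<^esub> a1, True) else (inv\<^bsub>K\<^esub> a1, inv\<^bsub>K\<^esub> a2, False))"
proof -
  interpret K: group K by fact
  interpret W: group "wreath2 K" by (rule group_wr) fact
  show ?thesis
    by (rule W.inv_equality) (use assms in \<open>auto simp: wr_carrier wr_mult wr_one\<close>)
qed

locale gkh = normal H K for H and K (structure) +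
  fixes \<alpha>
  assumes hom: "\<alpha> \<in> hom (K Mod H) (K Mod H)"
    and inv2: "\<forall>x\<in>carrier (K Mod H). \<alpha> (\<alpha> x) = x"
begin

lemma cos_car: "k \<in> carrier K \<Longrightarrow> H #> k \<in> carrier (K Mod H)"
  by (simp add: FactGroup_def rcosetsI subset)

lemma al_car: "k \<in> carrier K \<Longrightarrow> \<alpha> (H #> k) \<in> carrier (K Mod H)"
  using hom cos_car by (auto simp: hom_def)

lemma al_cos: "k \<in> carrier K \<Longrightarrow> \<exists>c\<in>carrier K. \<alpha> (H #> k) = H #> c"
  using al_car by (auto simp: FactGroup_def RCOSETS_def)

lemma al_mult: "a \<in> carrier K \<Longrightarrow> b \<in> carrier K \<Longrightarrow> \<alpha> (H #> (a \<otimes> b)) = \<alpha> (H #> a) <#> \<alpha> (H #> b)"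
proof -
  assume a: "a \<in> carrier K" and b: "b \<in> carrier K"
  have "\<alpha> (H #> (a \<otimes> b)) = \<alpha> ((H #> a) \<otimes>\<^bsub>K Mod H\<^esub> (H #> b))"
    using a b by (simp add: FactGroup_def rcos_sum)
  also have "\<dots> = \<alpha> (H #> a) \<otimes>\<^bsub>K Mod H\<^esub> \<alpha> (H #> b)"
    using hom_mult[OF hom cos_car[OF a] cos_car[OF b]] .
  finally show ?thesis by (simp add: FactGroup_def)
qed

lemma al_inv: "a \<in> carrier K \<Longrightarrow> \<alpha> (H #> (inv a)) = set_inv (\<alpha> (H #> a))"
proof -
  assume a: "a \<in> carrier K"
  interpret Q: group "K Mod H" by (rule factorgroup_is_group)
  interpret gh: group_hom "K Mod H" "K Mod H" \<alpha>
    by (unfold_locales) (rule hom)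
  have "\<alpha> (H #> (inv a)) = \<alpha> (inv\<^bsub>K Mod H\<^esub> (H #> a))"
    using a by (simp add: inv_FactGroup cos_car rcos_inv)
  also have "\<dots> = inv\<^bsub>K Mod H\<^esub> \<alpha> (H #> a)"
    using cos_car[OF a] by simp
  finally show ?thesis using al_car[OF a] by (simp add: inv_FactGroup)
qed

lemma al_H: "\<alpha> H = H"
proof -
  interpret Q: group "K Mod H" by (rule factorgroup_is_group)
  interpret gh: group_hom "K Mod H" "K Mod H" \<alpha>
    by (unfold_locales) (rule hom)
  show ?thesis using gh.hom_one by (simp add: FactGroup_def)
qed

lemma al_sym: "a \<in> carrier K \<Longrightarrow> b \<in> carrier K \<Longrightarrow> H #> b = \<alpha> (H #> a) \<Longrightarrow> H #> a = \<alpha> (H #> b)"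
  using inv2 cos_car by auto

definition D :: "(_ \<times> _ \<times> bool) set" where "D = {(k1,k2,b). k1\<in>carrier K \<and> k2\<in>carrier K \<and> H #> k2 = \<alpha> (H #> k1)}"

lemma D_sub: "subgroup D (wreath2 K)"
proof -
  interpret W: group "wreath2 K" by (rule group_wr) (rule is_group)
  show ?thesis
  proof (rule W.subgroupI)
    show "D \<subseteq> carrier (wreath2 K)" by (auto simp: D_def wr_carrier)
    have "(\<one>,\<one>,False) \<in> D" using al_H unfolding D_def by (simp add: coset_mult_one subset)
    then show "D \<noteq> {}" by blast
  next
    fix x assume "x \<in> D"
    then obtain a1 a2 s where x: "x = (a1,a2,s)" "a1 \<in> carrier K" "a2 \<in> carrier K" "H #> a2 = \<alpha> (H #> a1)"
      by (auto simp: D_def)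
    have e: "H #> inv a2 = \<alpha> (H #> inv a1)" 
    proof -
      have "H #> inv a2 = set_inv (H #> a2)" using rcos_inv[OF x(3)] by (rule sym)
      also have "\<dots> = \<alpha> (H #> inv a1)" using x(4) al_inv[OF x(2)] by simp
      finally show ?thesis .
    qed
    have e2: "H #> inv a1 = \<alpha> (H #> inv a2)" by (rule al_sym) (use x e in auto)
    show "inv\<^bsub>wreath2 K\<^esub> x \<in> D"
      using x e e2 by (simp add: wr_inv[OF is_group] D_def)
  next
    fix x y assume "x \<in> D" "y \<in> D"
    then obtain a1 a2 s b1 b2 t where x: "x = (a1,a2,s)" "a1 \<in> carrier K" "a2 \<in> carrier K" "H #> a2 = \<alpha> (H #> a1)"
      and y: "y = (b1,b2,t)" "b1 \<in> carrier K" "b2 \<in> carrier K" "H #> b2 = \<alpha> (H #> b1)"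
      by (auto simp: D_def)
    have y2: "H #> b1 = \<alpha> (H #> b2)" by (rule al_sym) (use y in auto)
    have c1: "H #> (a2 \<otimes> b2) = \<alpha> (H #> (a1 \<otimes> b1))"
      using x y by (simp only: al_mult rcos_sum[symmetric, OF x(3) y(3)])
    have c2: "H #> (a2 \<otimes> b1) = \<alpha> (H #> (a1 \<otimes> b2))"
      using x y y2 by (simp only: al_mult rcos_sum[symmetric, OF x(3) y(2)])
    show "x \<otimes>\<^bsub>wreath2 K\<^esub> y \<in> D"
      using x y c1 c2 by (simp add: wr_mult D_def)
  qed
qed

lemma G_eq: "GKHa K H \<alpha> = D"
proof
  interpret W: group "wreath2 K" by (rule group_wr) (rule is_group)
  show "GKHa K H \<alpha> \<subseteq> D"
    unfolding GKHa_def
  proof (rule W.generate_subgroup_incl[OF _ D_sub])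
    show "{(\<one>, \<one>, True)} \<union> H \<times> H \<times> {False} \<union>
      {(k1, k2, False) |k1 k2. k1 \<in> carrier K \<and> k2 \<in> carrier K \<and> H #> k2 = \<alpha> (H #> k1)} \<subseteq> D"
      using al_H by (auto simp: D_def coset_mult_one subset coset_join2 subgroup_axioms mem_carrier)
  qed
  show "D \<subseteq> GKHa K H \<alpha>"
  proof
    fix x assume "x \<in> D"
    then obtain a1 a2 s where x: "x = (a1,a2,s)" "a1 \<in> carrier K" "a2 \<in> carrier K" "H #> a2 = \<alpha> (H #> a1)"
      by (auto simp: D_def)
    have g1: "(a1,a2,False) \<in> GKHa K H \<alpha>" unfolding GKHa_def using x by (intro generate.incl) auto
    have g2: "(\<one>,\<one>,True) \<in> GKHa K H \<alpha>" unfolding GKHa_def by (intro generate.incl) auto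
    show "x \<in> GKHa K H \<alpha>"
    proof (cases s)
      case False then show ?thesis using x g1 by simp
    next
      case True
      have "(a1,a2,False) \<otimes>\<^bsub>wreath2 K\<^esub> (\<one>,\<one>,True) \<in> GKHa K H \<alpha>"
        using g1 g2 unfolding GKHa_def by (rule generate.eng)
      then show ?thesis using x True by (simp add: wr_mult)
    qed
  qed
qed


lemma coset_eqI: "a \<in> carrier K \<Longrightarrow> b \<in> carrier K \<Longrightarrow> a \<otimes> inv b \<in> H \<Longrightarrow> H #> a = H #> b"
proof -
  assume a: "a \<in> carrier K" and b: "b \<in> carrier K" and h: "a \<otimes> inv b \<in> H"
  have "a = (a \<otimes> inv b) \<otimes> b" using a b by (simp add: m_assoc)
  also have "\<dots> \<in> H #> b" using h b by (intro rcosI) (auto simp: subset)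
  finally have "a \<in> H #> b" .
  then show ?thesis using repr_independence[OF _ b subgroup_axioms] by simp
qed

lemma coset_eqD: "a \<in> carrier K \<Longrightarrow> b \<in> carrier K \<Longrightarrow> H #> a = H #> b \<Longrightarrow> a \<otimes> inv b \<in> H"
proof -
  assume a: "a \<in> carrier K" and b: "b \<in> carrier K" and e: "H #> a = H #> b"
  have "a \<in> H #> b" using rcos_self[OF a subgroup_axioms] e by simp
  then obtain h where h: "h \<in> H" "a = h \<otimes> b" by (auto simp: r_coset_def)
  then show ?thesis using b by (simp add: m_assoc mem_carrier)
qed

lemma conj: "a \<in> carrier K \<Longrightarrow> b \<in> carrier K \<Longrightarrow> H #> a = H #> b \<Longrightarrow> h \<in> H \<Longrightarrow> a \<otimes> h \<otimes> inv b \<in> H"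
proof -
  assume a: "a \<in> carrier K" and b: "b \<in> carrier K" and e: "H #> a = H #> b" and h: "h \<in> H"
  have "a \<otimes> h \<otimes> inv b = (a \<otimes> h \<otimes> inv a) \<otimes> (a \<otimes> inv b)"
  proof -
    have "inv a \<otimes> (a \<otimes> inv b) = inv b" using a b by (simp add: m_assoc[symmetric])
    then show ?thesis using a b h by (simp add: m_assoc mem_carrier)
  qed
  also have "\<dots> \<in> H" using inv_op_closed2[OF a h] coset_eqD[OF a b e] by (rule subgroup.m_closed[OF subgroup_axioms])
  finally show ?thesis .
qed

lemma conj1: "a \<in> carrier K \<Longrightarrow> h \<in> H \<Longrightarrow> a \<otimes> h \<otimes> inv a \<in> H"
  by (rule inv_op_closed2)

lemma normal_crit:
  "N \<lhd> (wreath2 K)\<lparr>carrier := D\<rparr> \<longleftrightarrow> subgroup N ((wreath2 K)\<lparr>carrier := D\<rparr>) \<and>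
     (\<forall>x\<in>D. \<forall>h\<in>N. x \<otimes>\<^bsub>wreath2 K\<^esub> h \<otimes>\<^bsub>wreath2 K\<^esub> inv\<^bsub>wreath2 K\<^esub> x \<in> N)"
proof -
  interpret W: group "wreath2 K" by (rule group_wr) (rule is_group)
  interpret G': group "(wreath2 K)\<lparr>carrier := D\<rparr>" by (rule subgroup.subgroup_is_group[OF D_sub]) (rule W.is_group)
  show ?thesis unfolding G'.normal_inv_iff
    using W.m_inv_consistent[OF D_sub] by auto
qed

lemma N_sub: "N \<subseteq> D \<Longrightarrow> subgroup N (wreath2 K) \<Longrightarrow> subgroup N ((wreath2 K)\<lparr>carrier := D\<rparr>)"
proof -
  interpret W: group "wreath2 K" by (rule group_wr) (rule is_group)
  show "N \<subseteq> D \<Longrightarrow> subgroup N (wreath2 K) \<Longrightarrow> ?thesis"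
    using W.subgroup_incl[OF _ D_sub] by blast
qed

lemma HH_D: "H \<times> H \<times> (UNIV::bool set) \<subseteq> D"
  using al_H by (auto simp: D_def coset_join2 subgroup_axioms mem_carrier)

lemma HHU_sub: "subgroup (H \<times> H \<times> (UNIV::bool set)) (wreath2 K)"
proof -
  interpret W: group "wreath2 K" by (rule group_wr) (rule is_group)
  show ?thesis
  proof (rule W.subgroupI)
    have "(\<one>,\<one>,False) \<in> H \<times> H \<times> (UNIV::bool set)" by simp
    then show "H \<times> H \<times> (UNIV::bool set) \<noteq> {}" by blast
  qed (auto simp: wr_carrier wr_mult wr_inv[OF is_group] mem_carrier m_inv_closed)
qed

lemma HHF_sub: "subgroup (H \<times> H \<times> {False}) (wreath2 K)"
proof -
  interpret W: group "wreath2 K" by (rule group_wr) (rule is_group)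
  show ?thesis
  proof (rule W.subgroupI)
    have "(\<one>,\<one>,False) \<in> H \<times> H \<times> {False}" by simp
    then show "H \<times> H \<times> {False} \<noteq> {}" by blast
  qed (auto simp: wr_carrier wr_mult wr_inv[OF is_group] mem_carrier m_inv_closed)
qed

lemma N2: "(H \<times> H \<times> {False}) \<lhd> (wreath2 K)\<lparr>carrier := D\<rparr>"
  unfolding normal_crit
proof (intro conjI N_sub HHF_sub ballI)
  show "H \<times> H \<times> {False} \<subseteq> D" using HH_D by auto
  fix x h assume "x \<in> D" "h \<in> H \<times> H \<times> {False}"
  then obtain k1 k2 b h1 h2 where x: "x = (k1,k2,b)" "k1 \<in> carrier K" "k2 \<in> carrier K"
    and hh: "h = (h1,h2,False)" "h1 \<in> H" "h2 \<in> H"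
    by (auto simp: D_def)
  show "x \<otimes>\<^bsub>wreath2 K\<^esub> h \<otimes>\<^bsub>wreath2 K\<^esub> inv\<^bsub>wreath2 K\<^esub> x \<in> H \<times> H \<times> {False}"
    using x hh by (cases b) (simp_all add: wr_mult wr_inv[OF is_group] mem_carrier conj1)
qed

lemma N1: "(H \<times> H \<times> (UNIV::bool set)) \<lhd> (wreath2 K)\<lparr>carrier := D\<rparr> \<longleftrightarrow> (\<forall>x\<in>carrier (K Mod H). \<alpha> x = x)"
proof
  assume "(H \<times> H \<times> (UNIV::bool set)) \<lhd> (wreath2 K)\<lparr>carrier := D\<rparr>"
  then have C: "\<forall>x\<in>D. \<forall>h\<in>H \<times> H \<times> (UNIV::bool set). x \<otimes>\<^bsub>wreath2 K\<^esub> h \<otimes>\<^bsub>wreath2 K\<^esub> inv\<^bsub>wreath2 K\<^esub> x \<in> H \<times> H \<times> (UNIV::bool set)"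
    unfolding normal_crit by blast
  show "\<forall>x\<in>carrier (K Mod H). \<alpha> x = x"
  proof
    fix Y assume "Y \<in> carrier (K Mod H)"
    then obtain k1 where k1: "k1 \<in> carrier K" "Y = H #> k1" by (auto simp: FactGroup_def RCOSETS_def)
    obtain k2 where k2: "k2 \<in> carrier K" "\<alpha> (H #> k1) = H #> k2" using al_cos[OF k1(1)] by auto
    have xD: "(k1,k2,False) \<in> D" using k1 k2 by (simp add: D_def)
    have hN: "(\<one>,\<one>,True) \<in> H \<times> H \<times> (UNIV::bool set)" by simp
    have "(k1,k2,False) \<otimes>\<^bsub>wreath2 K\<^esub> (\<one>,\<one>,True) \<otimes>\<^bsub>wreath2 K\<^esub> inv\<^bsub>wreath2 K\<^esub> (k1,k2,False) \<in> H \<times> H \<times> (UNIV::bool set)"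
      using C xD hN by blast
    then have "k1 \<otimes> inv k2 \<in> H" using k1 k2 by (simp add: wr_mult wr_inv[OF is_group])
    then have "H #> k1 = H #> k2" using k1 k2 coset_eqI by blast
    then show "\<alpha> Y = Y" using k1 k2 by simp
  qed
next
  assume A: "\<forall>x\<in>carrier (K Mod H). \<alpha> x = x"
  show "(H \<times> H \<times> (UNIV::bool set)) \<lhd> (wreath2 K)\<lparr>carrier := D\<rparr>"
    unfolding normal_crit
  proof (intro conjI N_sub HHU_sub ballI HH_D)
    fix x h assume "x \<in> D" "h \<in> H \<times> H \<times> (UNIV::bool set)"
    then obtain k1 k2 b h1 h2 c where x: "x = (k1,k2,b)" "k1 \<in> carrier K" "k2 \<in> carrier K"
      "H #> k2 = \<alpha> (H #> k1)" and hh: "h = (h1,h2,c)" "h1 \<in> H" "h2 \<in> H"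
      by (auto simp: D_def)
    have e: "H #> k1 = H #> k2" using x A cos_car by auto
    show "x \<otimes>\<^bsub>wreath2 K\<^esub> h \<otimes>\<^bsub>wreath2 K\<^esub> inv\<^bsub>wreath2 K\<^esub> x \<in> H \<times> H \<times> (UNIV::bool set)"
      using x(1-3) hh e by (cases b; cases c) (simp_all add: wr_mult wr_inv[OF is_group] mem_carrier conj1 conj e)
  qed
qed

end

theorem lemma4p1:
  fixes K H :: "(complex^2^2) set" and \<alpha> :: "(complex^2^2) set \<Rightarrow> (complex^2^2) set"
  assumes "subgroup K SL2" and "finite K"
    and "H \<lhd> SL2\<lparr>carrier := K\<rparr>"
    and "\<alpha> \<in> iso (SL2\<lparr>carrier := K\<rparr> Mod H) (SL2\<lparr>carrier := K\<rparr> Mod H)"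
    and "\<forall>x \<in> carrier (SL2\<lparr>carrier := K\<rparr> Mod H). \<alpha> (\<alpha> x) = x"
  shows "((H \<times> H \<times> UNIV) \<lhd> (wreath2 (SL2\<lparr>carrier := K\<rparr>))\<lparr>carrier := GKHa (SL2\<lparr>carrier := K\<rparr>) H \<alpha>\<rparr>
            \<longleftrightarrow> (\<forall>x \<in> carrier (SL2\<lparr>carrier := K\<rparr> Mod H). \<alpha> x = x))
       \<and> (H \<times> H \<times> {False}) \<lhd> (wreath2 (SL2\<lparr>carrier := K\<rparr>))\<lparr>carrier := GKHa (SL2\<lparr>carrier := K\<rparr>) H \<alpha>\<rparr>"
proof -
  interpret g: gkh H "SL2\<lparr>carrier := K\<rparr>" \<alpha>
    using assms(3,4,5) by (auto simp: gkh_def gkh_axioms_def iso_def)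
  show ?thesis using g.G_eq g.N1 g.N2 by simp
qed

end
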